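(* Let $r\ge5$, let $T$ be a $K_r$-tree, let $G$ be a graph, and let $S=V(G)\cap V(T)$. Then, for any run of the $(r-2)_*$-BP process on $T$ with seed set $S$, \[ \langle G\cup T\rangle_{K_r}\subseteq Q\cup T, \] where $Q$ is the complete graph on the vertex set $V(G)\cup\langle S;T\rangle_*$.
   Context: A graph $T$ is a $K_r$-tree if it is the union of copies $H_1,\dots,H_\vartheta$ of $K_r$ such that for each $1<i\le\vartheta$, $H_i$ shares exactly one edge with $H_1\cup\cdots\cup H_{i-1}$ (the common vertices being exactly the two endpoints of that edge). An edge of $T$ is internal if it lies in at least two of the $H_i$. The $(r-2)_*$-bootstrap percolation process on $T$ with seed set $S\subseteq V(T)$: initially the vertices of $S$ are infected; in each step, either (usual step) some uninfected vertex with at least $r-2$ infected neighbors in $T$ becomes infected; or else (special step), if no usual step is possible but for some internal edge $f$ there are two copies $H_i\ne H_j$ containing $f$ such that $H_i$ has $r-4$ infected vertices and $H_j$ has $1$ infected vertex, all these $r-3$ vertices not in $f$, then an arbitrarily chosen vertex $u\in f$ becomes infected; otherwise the process terminates. $\langle S;T\rangle_*$ denotes the set of eventually infected vertices. For a graph $F$, the $K_r$-dynamics repeatedly adds an edge whenever it is the only missing edge of some copy of $K_r$ on the vertex set of $F$; $\langle F\rangle_{K_r}$ is the final graph. *)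

theory Defs
  imports Main
begin

text \<open>Graphs are given by a vertex set and a set of edges, each edge being a
two-element set of vertices.\<close>

definition complete_edges :: "'a set \<Rightarrow> 'a set set" where
  "complete_edges V = {{x, y} | x y. x \<noteq> y \<and> x \<in> V \<and> y \<in> V}"

definition is_graph :: "'a set \<Rightarrow> 'a set set \<Rightarrow> bool" where
  "is_graph V E \<longleftrightarrow> E \<subseteq> complete_edges V"

text \<open>A K_r-tree, given by the list of vertex sets of its copies H_1, ..., H_theta of K_r.\<close>

definition kr_tree :: "nat \<Rightarrow> 'a set list \<Rightarrow> bool" where
  "kr_tree r Hs \<longleftrightarrow> Hs \<noteq> [] \<and> (\<forall>H\<in>set Hs. finite H \<and> card H = r) \<and>
     (\<forall>i. 0 < i \<and> i < length Hs \<longrightarrow>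
        (\<exists>x y. x \<noteq> y \<and> Hs ! i \<inter> \<Union> (set (take i Hs)) = {x, y} \<and>
               (\<exists>j<i. x \<in> Hs ! j \<and> y \<in> Hs ! j)))"

definition tree_verts :: "'a set list \<Rightarrow> 'a set" where
  "tree_verts Hs = \<Union> (set Hs)"

definition tree_edges :: "'a set list \<Rightarrow> 'a set set" where
  "tree_edges Hs = (\<Union>H\<in>set Hs. complete_edges H)"

definition internal_edge :: "'a set list \<Rightarrow> 'a set \<Rightarrow> bool" where
  "internal_edge Hs f \<longleftrightarrow> f \<in> tree_edges Hs \<and>
     (\<exists>i j. i < length Hs \<and> j < length Hs \<and> i \<noteq> j \<and> f \<subseteq> Hs ! i \<and> f \<subseteq> Hs ! j)"

definition usual_step :: "nat \<Rightarrow> 'a set list \<Rightarrow> 'a set \<Rightarrow> 'a \<Rightarrow> bool" where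
  "usual_step r Hs A v \<longleftrightarrow> v \<in> tree_verts Hs \<and> v \<notin> A \<and>
     r - 2 \<le> card {w \<in> A. {v, w} \<in> tree_edges Hs}"

definition bp_step :: "nat \<Rightarrow> 'a set list \<Rightarrow> 'a set \<Rightarrow> 'a set \<Rightarrow> bool" where
  "bp_step r Hs A A' \<longleftrightarrow>
     (\<exists>v. usual_step r Hs A v \<and> A' = insert v A) \<or>
     ((\<nexists>v. usual_step r Hs A v) \<and>
      (\<exists>f i j u. internal_edge Hs f \<and> i < length Hs \<and> j < length Hs \<and> i \<noteq> j \<and>
         f \<subseteq> Hs ! i \<and> f \<subseteq> Hs ! j \<and>
         card (Hs ! i \<inter> A) = r - 4 \<and> card (Hs ! j \<inter> A) = 1 \<and> f \<inter> A = {} \<and>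
         u \<in> f \<and> A' = insert u A))"

definition bp_final :: "nat \<Rightarrow> 'a set list \<Rightarrow> 'a set \<Rightarrow> 'a set \<Rightarrow> bool" where
  "bp_final r Hs S F \<longleftrightarrow> (bp_step r Hs)\<^sup>*\<^sup>* S F \<and> \<not> (\<exists>F'. bp_step r Hs F F')"

text \<open>The final edge set of the K_r-dynamics on the graph (V, E): the least edge set containing E
  closed under adding an edge which is the only missing edge of a copy of K_r on V.\<close>

inductive_set kr_closure :: "nat \<Rightarrow> 'a set \<Rightarrow> 'a set set \<Rightarrow> 'a set set"
  for r :: nat and V :: "'a set" and E :: "'a set set" where
  base: "e \<in> E \<Longrightarrow> e \<in> kr_closure r V E"
| add: "K \<subseteq> V \<Longrightarrow> finite K \<Longrightarrow> card K = r \<Longrightarrow> u \<in> K \<Longrightarrow> v \<in> K \<Longrightarrow> u \<noteq> v \<Longrightarrow>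
        (\<forall>x\<in>K. \<forall>y\<in>K. x \<noteq> y \<and> {x, y} \<noteq> {u, v} \<longrightarrow> {x, y} \<in> kr_closure r V E) \<Longrightarrow>
        {u, v} \<in> kr_closure r V E"

end

theory Submission
  imports Defs
begin
lemma in_take_union:
  assumes "n \<le> length xs"
  shows "p \<in> \<Union>(set (take n xs)) \<longleftrightarrow> (\<exists>i<n. p \<in> xs!i)"
proof
  assume "p \<in> \<Union>(set (take n xs))"
  then obtain X where "X \<in> set (take n xs)" "p \<in> X" by blast
  then obtain i where "i < length (take n xs)" "X = take n xs ! i" by (auto simp: in_set_conv_nth)
  then show "\<exists>i<n. p \<in> xs!i" using \<open>p \<in> X\<close> by (intro exI[of _ i]) auto
next
  assume "\<exists>i<n. p \<in> xs!i"
  then obtain i where i: "i < n" "p \<in> xs!i" by blast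
  then have "take n xs ! i \<in> set (take n xs)" using assms by (intro nth_mem) simp
  then show "p \<in> \<Union>(set (take n xs))" using i by auto
qed

lemma kr_step:
  assumes "kr_tree r Hs" "0 < n" "n < length Hs"
  shows "\<exists>x y j. j < n \<and> x \<in> Hs!j \<and> y \<in> Hs!j \<and>
     (\<forall>p. p \<in> Hs!n \<longrightarrow> (\<exists>i<n. p \<in> Hs!i) \<longrightarrow> p = x \<or> p = y)"
proof -
  obtain x y where xy: "Hs ! n \<inter> \<Union> (set (take n Hs)) = {x, y}"
    and j: "\<exists>j<n. x \<in> Hs ! j \<and> y \<in> Hs ! j"
    using assms unfolding kr_tree_def by blast
  have "\<forall>p. p \<in> Hs!n \<longrightarrow> (\<exists>i<n. p \<in> Hs!i) \<longrightarrow> p = x \<or> p = y"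
  proof (intro allI impI)
    fix p assume p: "p \<in> Hs!n" "\<exists>i<n. p \<in> Hs!i"
    then have "p \<in> \<Union> (set (take n Hs))" using in_take_union[of n Hs p] assms(3) by simp
    then show "p = x \<or> p = y" using xy p by blast
  qed
  then show ?thesis using j by blast
qed

lemma red:
  assumes "kr_tree r Hs" "0 < n" "n < length Hs"
    "\<exists>i<n. p \<in> Hs!i" "\<exists>i<n. q \<in> Hs!i" "\<exists>i<Suc n. p \<in> Hs!i \<and> q \<in> Hs!i"
  shows "\<exists>i<n. p \<in> Hs!i \<and> q \<in> Hs!i"
proof -
  obtain x y j where j: "j<n" "x \<in> Hs!j" "y \<in> Hs!j"
    and P: "\<forall>p. p \<in> Hs!n \<longrightarrow> (\<exists>i<n. p \<in> Hs!i) \<longrightarrow> p = x \<or> p = y"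
    using kr_step[OF assms(1-3)] by blast
  obtain i where i: "i < Suc n" "p \<in> Hs!i" "q \<in> Hs!i" using assms(6) by blast
  show ?thesis
  proof (cases "i < n")
    case True then show ?thesis using i by blast
  next
    case False then have "i = n" using i by simp
    then have "p = x \<or> p = y" "q = x \<or> q = y" using P i assms(4,5) by blast+
    then show ?thesis using j by blast
  qed
qed

lemma clique_aux:
  assumes T: "kr_tree r Hs"
  shows "1 \<le> n \<Longrightarrow> n \<le> length Hs \<Longrightarrow> a \<in> Z \<Longrightarrow> b \<in> Z \<Longrightarrow> a \<noteq> b \<Longrightarrow>
    (\<forall>p\<in>Z. \<forall>q\<in>Z. p \<noteq> q \<longrightarrow> (\<exists>i<n. p \<in> Hs!i \<and> q \<in> Hs!i)) \<Longrightarrow> \<exists>i<n. Z \<subseteq> Hs!i"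
proof (induction n arbitrary: Z a b)
  case 0 then show ?case by simp
next
  case (Suc n)
  show ?case
  proof (cases "n = 0")
    case True
    have "Z \<subseteq> Hs!0"
    proof
      fix p assume p: "p \<in> Z"
      show "p \<in> Hs!0"
      proof (cases "p = a")
        case True
        then show ?thesis using Suc.prems p \<open>n = 0\<close> by fastforce
      next
        case False
        then show ?thesis using Suc.prems p \<open>n = 0\<close> by fastforce
      qed
    qed
    then show ?thesis by auto
  next
    case False
    then have n0: "0 < n" and nl: "n < length Hs" using Suc.prems by auto
    show ?thesis
    proof (cases "\<exists>w\<in>Z. \<not> (\<exists>i<n. w \<in> Hs!i)")
      case True
      then obtain w where w: "w \<in> Z" "\<not> (\<exists>i<n. w \<in> Hs!i)" by blast
      have new: "p \<in> Hs!n" if pz: "p \<in> Z" "p \<noteq> w" for p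
      proof -
        obtain i where "i < Suc n" "p \<in> Hs!i" "w \<in> Hs!i" using Suc.prems(6) pz w by blast
        then show ?thesis using w less_Suc_eq by blast
      qed
      have "w \<in> Hs!n"
      proof -
        obtain q where "q \<in> Z" "q \<noteq> w" using Suc.prems(3-5) by metis
        then obtain i where "i < Suc n" "q \<in> Hs!i" "w \<in> Hs!i" using Suc.prems(6) w by metis
        then show ?thesis using w less_Suc_eq by blast
      qed
      then have "Z \<subseteq> Hs!n" using new by blast
      then show ?thesis by blast
    next
      case False
      have "\<forall>p\<in>Z. \<forall>q\<in>Z. p \<noteq> q \<longrightarrow> (\<exists>i<n. p \<in> Hs!i \<and> q \<in> Hs!i)"
        using red[OF T n0 nl] False Suc.prems(6) by blast
      then obtain i where "i<n" "Z \<subseteq> Hs!i" using Suc.IH[of a Z b] Suc.prems n0 by auto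
      then show ?thesis using less_SucI by blast
    qed
  qed
qed

lemma cycle_aux:
  assumes T: "kr_tree r Hs"
  shows "1 \<le> n \<Longrightarrow> n \<le> length Hs \<Longrightarrow>
    \<exists>i<n. a \<in> Hs!i \<and> b \<in> Hs!i \<Longrightarrow> \<exists>i<n. b \<in> Hs!i \<and> c \<in> Hs!i \<Longrightarrow>
    \<exists>i<n. c \<in> Hs!i \<and> d \<in> Hs!i \<Longrightarrow> \<exists>i<n. d \<in> Hs!i \<and> a \<in> Hs!i \<Longrightarrow>
    (\<exists>i<n. a \<in> Hs!i \<and> c \<in> Hs!i) \<or> (\<exists>i<n. b \<in> Hs!i \<and> d \<in> Hs!i)"
proof (induction n)
  case 0 then show ?case by simp
next
  case (Suc n)
  show ?case
  proof (cases "n = 0")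
    case True
    then show ?thesis using Suc.prems by auto
  next
    case False
    then have n0: "0 < n" and nl: "n < length Hs" using Suc.prems by auto
    let ?V = "\<lambda>p. \<exists>i<n. p \<in> Hs!i"
    have new: "p \<in> Hs!n \<and> q \<in> Hs!n" if "\<not> ?V p" "\<exists>i<Suc n. p \<in> Hs!i \<and> q \<in> Hs!i" for p q
      using that less_Suc_eq by blast
    show ?thesis
    proof (cases "?V a \<and> ?V b \<and> ?V c \<and> ?V d")
      case True
      have "\<exists>i<n. a \<in> Hs!i \<and> b \<in> Hs!i" "\<exists>i<n. b \<in> Hs!i \<and> c \<in> Hs!i"
        "\<exists>i<n. c \<in> Hs!i \<and> d \<in> Hs!i" "\<exists>i<n. d \<in> Hs!i \<and> a \<in> Hs!i"
        using red[OF T n0 nl] True Suc.prems by blast+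
      then have "(\<exists>i<n. a \<in> Hs!i \<and> c \<in> Hs!i) \<or> (\<exists>i<n. b \<in> Hs!i \<and> d \<in> Hs!i)"
        using Suc.IH n0 nl by auto
      then show ?thesis using less_Suc_eq by blast
    next
      case False
      then consider "\<not> ?V a" | "\<not> ?V b" | "\<not> ?V c" | "\<not> ?V d" by blast
      then show ?thesis
      proof cases
        case 1
        then have "b \<in> Hs!n" "d \<in> Hs!n" using new Suc.prems by blast+
        then show ?thesis by blast
      next
        case 2
        then have "a \<in> Hs!n" "c \<in> Hs!n" using new Suc.prems by blast+
        then show ?thesis by blast
      next
        case 3
        then have "b \<in> Hs!n" "d \<in> Hs!n" using new Suc.prems by blast+
        then show ?thesis by blast
      next
        case 4
        then have "a \<in> Hs!n" "c \<in> Hs!n" using new Suc.prems by blast+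
        then show ?thesis by blast
      qed
    qed
  qed
qed

lemma copies_inter_lt:
  assumes T: "kr_tree r Hs" and "i < j" "j < length Hs"
  shows "card (Hs!i \<inter> Hs!j) \<le> 2"
proof -
  obtain x y k where P: "\<forall>p. p \<in> Hs!j \<longrightarrow> (\<exists>i<j. p \<in> Hs!i) \<longrightarrow> p = x \<or> p = y"
    using kr_step[OF T, of j] assms by auto
  have "Hs!i \<inter> Hs!j \<subseteq> {x,y}" using P assms by blast
  then have "card (Hs!i \<inter> Hs!j) \<le> card {x,y}" by (intro card_mono) auto
  also have "\<dots> \<le> 2" by (simp add: card_insert_if)
  finally show ?thesis .
qed

lemma copies_inter:
  assumes T: "kr_tree r Hs" and "i < length Hs" "j < length Hs" "i \<noteq> j"
  shows "card (Hs!i \<inter> Hs!j) \<le> 2"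
proof (cases "i < j")
  case True then show ?thesis using copies_inter_lt[OF T] assms by blast
next
  case False then have "j < i" using assms by simp
  then show ?thesis using copies_inter_lt[OF T, of j i] assms by (simp add: Int_commute)
qed

lemma three_common:
  assumes T: "kr_tree r Hs" and "i < length Hs" "j < length Hs"
    "a \<in> Hs!i" "b \<in> Hs!i" "c \<in> Hs!i" "a \<in> Hs!j" "b \<in> Hs!j" "c \<in> Hs!j"
    "a \<noteq> b" "a \<noteq> c" "b \<noteq> c"
  shows "i = j"
proof (rule ccontr)
  assume "i \<noteq> j"
  then have le: "card (Hs!i \<inter> Hs!j) \<le> 2" using copies_inter[OF T] assms by blast
  have "finite (Hs!i)" using T assms(2) unfolding kr_tree_def by auto
  then have "card {a,b,c} \<le> card (Hs!i \<inter> Hs!j)" using assms by (intro card_mono) auto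
  then show False using le assms by simp
qed

lemma tree_edges_iff:
  "{a,b} \<in> tree_edges Hs \<longleftrightarrow> a \<noteq> b \<and> (\<exists>i<length Hs. a \<in> Hs!i \<and> b \<in> Hs!i)"
proof
  assume "{a,b} \<in> tree_edges Hs"
  then obtain H x y where H: "H \<in> set Hs" "{a,b} = {x,y}" "x \<noteq> y" "x \<in> H" "y \<in> H"
    unfolding tree_edges_def complete_edges_def by blast
  then have ab: "a \<in> H" "b \<in> H" "a \<noteq> b" by (auto simp: doubleton_eq_iff)
  obtain i where "i < length Hs" "H = Hs!i" using H(1) by (auto simp: in_set_conv_nth)
  then show "a \<noteq> b \<and> (\<exists>i<length Hs. a \<in> Hs!i \<and> b \<in> Hs!i)" using ab by blast
next
  assume "a \<noteq> b \<and> (\<exists>i<length Hs. a \<in> Hs!i \<and> b \<in> Hs!i)"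
  then obtain i where i: "a \<noteq> b" "i < length Hs" "a \<in> Hs!i" "b \<in> Hs!i" by blast
  then have "Hs!i \<in> set Hs" by simp
  moreover have "{a,b} \<in> complete_edges (Hs!i)" using i unfolding complete_edges_def by blast
  ultimately show "{a,b} \<in> tree_edges Hs" unfolding tree_edges_def by blast
qed

lemma complete_edges_iff:
  "{a,b} \<in> complete_edges W \<longleftrightarrow> a \<noteq> b \<and> a \<in> W \<and> b \<in> W"
  unfolding complete_edges_def by (auto simp: doubleton_eq_iff)




definition cop :: "'a set list \<Rightarrow> 'a \<Rightarrow> 'a \<Rightarrow> bool" where
  "cop Hs p q \<longleftrightarrow> (\<exists>i<length Hs. p \<in> Hs!i \<and> q \<in> Hs!i)"

lemma cop_sym: "cop Hs p q \<Longrightarrow> cop Hs q p" unfolding cop_def by blast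

lemma kr_len: "kr_tree r Hs \<Longrightarrow> length Hs \<ge> 1"
proof -
  assume "kr_tree r Hs"
  then have "Hs \<noteq> []" by (rule kr_tree_def[THEN iffD1, THEN conjunct1])
  then show ?thesis by (cases Hs) simp_all
qed

lemma kr_fin: "kr_tree r Hs \<Longrightarrow> i < length Hs \<Longrightarrow> finite (Hs!i)"
proof -
  assume T: "kr_tree r Hs" and i: "i < length Hs"
  have "\<forall>H\<in>set Hs. finite H \<and> card H = r" by (rule T[unfolded kr_tree_def, THEN conjunct2, THEN conjunct1])
  moreover have "Hs!i \<in> set Hs" using i by simp
  ultimately show ?thesis by blast
qed

lemma kr_finTV: "kr_tree r Hs \<Longrightarrow> finite (tree_verts Hs)"
proof -
  assume T: "kr_tree r Hs"
  have "\<forall>H\<in>set Hs. finite H" using kr_fin[OF T] by (auto simp: in_set_conv_nth)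
  then show ?thesis unfolding tree_verts_def by (intro finite_Union) auto
qed

lemma clique_cop:
  assumes T: "kr_tree r Hs" and "a \<in> Z" "b \<in> Z" "a \<noteq> b"
    and "\<And>p q. p \<in> Z \<Longrightarrow> q \<in> Z \<Longrightarrow> p \<noteq> q \<Longrightarrow> cop Hs p q"
  shows "\<exists>i<length Hs. Z \<subseteq> Hs!i"
proof -
  have L: "length Hs \<ge> 1" using kr_len[OF T] .
  show ?thesis
  proof (rule clique_aux[OF T L order_refl, of a Z b])
    show "a \<in> Z" "b \<in> Z" "a \<noteq> b" by (fact assms)+
    show "\<forall>p\<in>Z. \<forall>q\<in>Z. p \<noteq> q \<longrightarrow> (\<exists>i<length Hs. p \<in> Hs ! i \<and> q \<in> Hs ! i)"
    proof (intro ballI impI)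
      fix p q assume "p \<in> Z" "q \<in> Z" "p \<noteq> q"
      then show "\<exists>i<length Hs. p \<in> Hs ! i \<and> q \<in> Hs ! i"
        using assms(5)[of p q] unfolding cop_def by simp
    qed
  qed
qed

lemma clique3:
  assumes T: "kr_tree r Hs" and "a \<noteq> b" "cop Hs a b" "cop Hs a c" "cop Hs b c"
  shows "\<exists>i<length Hs. a \<in> Hs!i \<and> b \<in> Hs!i \<and> c \<in> Hs!i"
proof -
  have s: "cop Hs b a" "cop Hs c a" "cop Hs c b"
    using cop_sym[OF assms(3)] cop_sym[OF assms(4)] cop_sym[OF assms(5)] .
  have "\<exists>i<length Hs. {a,b,c} \<subseteq> Hs!i"
  proof (rule clique_cop[OF T, of a _ b])
    fix p q assume "p \<in> {a,b,c}" "q \<in> {a,b,c}" "p \<noteq> q"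
    then show "cop Hs p q" using assms(3-) s by (elim insertE emptyE) simp_all
  qed (use assms(2) in simp_all)
  then obtain i where "i < length Hs" "{a,b,c} \<subseteq> Hs!i" by blast
  then show ?thesis by blast
qed

lemma clique4:
  assumes T: "kr_tree r Hs" and "a \<noteq> b" "cop Hs a b" "cop Hs a c" "cop Hs b c"
    "cop Hs a d" "cop Hs b d" "cop Hs c d"
  shows "\<exists>i<length Hs. a \<in> Hs!i \<and> b \<in> Hs!i \<and> c \<in> Hs!i \<and> d \<in> Hs!i"
proof -
  have s: "cop Hs b a" "cop Hs c a" "cop Hs c b" "cop Hs d a" "cop Hs d b" "cop Hs d c"
    using cop_sym[OF assms(3)] cop_sym[OF assms(4)] cop_sym[OF assms(5)]
      cop_sym[OF assms(6)] cop_sym[OF assms(7)] cop_sym[OF assms(8)] .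
  have "\<exists>i<length Hs. {a,b,c,d} \<subseteq> Hs!i"
  proof (rule clique_cop[OF T, of a _ b])
    fix p q assume "p \<in> {a,b,c,d}" "q \<in> {a,b,c,d}" "p \<noteq> q"
    then show "cop Hs p q" using assms(3-) s by (elim insertE emptyE) simp_all
  qed (use assms(2) in simp_all)
  then obtain i where "i < length Hs" "{a,b,c,d} \<subseteq> Hs!i" by blast
  then show ?thesis by blast
qed



lemma two_elems:
  assumes "finite A" "2 \<le> card A"
  obtains a b where "a \<in> A" "b \<in> A" "a \<noteq> b"
  using assms card_le_Suc0_iff_eq[OF assms(1)] by fastforce

lemma te_cop: "{a,b} \<in> tree_edges Hs \<longleftrightarrow> a \<noteq> b \<and> cop Hs a b"
  unfolding cop_def by (rule tree_edges_iff)

lemma key: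
  fixes Hs :: "'a set list"
  assumes r5: "r \<ge> 5" and T: "kr_tree r Hs"
    and SF: "VG \<inter> tree_verts Hs \<subseteq> F"
    and nous: "\<And>w. \<not> usual_step r Hs F w"
    and nosp: "\<And>f i j w. internal_edge Hs f \<Longrightarrow> i < length Hs \<Longrightarrow> j < length Hs \<Longrightarrow> i \<noteq> j \<Longrightarrow>
         f \<subseteq> Hs ! i \<Longrightarrow> f \<subseteq> Hs ! j \<Longrightarrow>
         card (Hs ! i \<inter> F) = r - 4 \<Longrightarrow> card (Hs ! j \<inter> F) = 1 \<Longrightarrow> f \<inter> F = {} \<Longrightarrow> w \<in> f \<Longrightarrow> False"
    and K: "finite K" "card K = r" "u \<in> K" "v \<in> K" "u \<noteq> v"
    and pairs: "\<And>x y. x \<in> K \<Longrightarrow> y \<in> K \<Longrightarrow> x \<noteq> y \<Longrightarrow> {x,y} \<noteq> {u,v} \<Longrightarrow>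
        {x,y} \<in> complete_edges (VG \<union> F) \<union> tree_edges Hs"
    and notuv: "{u,v} \<notin> complete_edges (VG \<union> F) \<union> tree_edges Hs"
    and uW: "u \<notin> VG \<union> F"
  shows False
proof -
  define W where "W = VG \<union> F"
  define TE where "TE a b \<longleftrightarrow> a \<noteq> b \<and> cop Hs a b" for a b
  have te: "{a,b} \<in> tree_edges Hs \<longleftrightarrow> TE a b" for a b
    unfolding TE_def by (rule te_cop)
  have TEsym: "TE b a" if "TE a b" for a b
  proof -
    have "a \<noteq> b" "cop Hs a b" using that unfolding TE_def by simp_all
    then show ?thesis unfolding TE_def using cop_sym[of Hs a b] by simp
  qed
  have TEv: "TE a b \<Longrightarrow> a \<in> tree_verts Hs" for a b
    unfolding TE_def cop_def tree_verts_def by (blast intro: nth_mem)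
  have WF: "a \<in> tree_verts Hs \<Longrightarrow> a \<in> W \<Longrightarrow> a \<in> F" for a using SF W_def by blast
  have finTV: "finite (tree_verts Hs)" by (rule kr_finTV[OF T])
  have finH: "finite (Hs!i)" if "i < length Hs" for i by (rule kr_fin[OF T that])
  define N where "N a = {w \<in> F. {a,w} \<in> tree_edges Hs}" for a
  have Nfin: "finite (N a)" for a
  proof (rule finite_subset[OF _ finTV])
    show "N a \<subseteq> tree_verts Hs" unfolding N_def te using TEsym TEv by blast
  qed
  have Ncard: "card (N a) < r - 2" if "a \<in> tree_verts Hs" "a \<notin> F" for a
    using nous[of a] that unfolding usual_step_def N_def by auto
  have notW_adj: "TE x z" if "x \<in> K" "z \<in> K" "x \<noteq> z" "{x,z} \<noteq> {u,v}" "x \<notin> W" for x z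
  proof -
    have "{x,z} \<notin> complete_edges W" using complete_edges_iff[of x z W] that(5) by blast
    then show ?thesis using pairs[OF that(1-4)] te W_def by blast
  qed
  have nTEuv: "\<not> TE u v" using notuv te by blast
  define X where "X = K - {u,v}"
  have finX: "finite X" using K X_def by simp
  have cardX: "card X = r - 2" unfolding X_def using K by (subst card_Diff_subset) auto
  have uX: "TE u x" if "x \<in> X" for x
  proof (rule notW_adj)
    show "u \<in> K" "x \<in> K" "u \<noteq> x" using that K X_def by auto
    show "{u, x} \<noteq> {u, v}" using that X_def by (auto simp: doubleton_eq_iff)
    show "u \<notin> W" using uW W_def by simp
  qed
  have uF: "u \<notin> F" using uW by simp
  have "X \<noteq> {}"
  proof
    assume "X = {}"
    then have "card X = 0" by simp
    then show False using cardX r5 by simp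
  qed
  then obtain y0 where "y0 \<in> X" by blast
  then have uTV: "u \<in> tree_verts Hs" using uX TEv by blast
  have XFN: "X \<inter> F \<subseteq> N u" unfolding N_def using uX te by blast
  have cXF: "card (X \<inter> F) < r - 2"
    using card_mono[OF Nfin XFN] Ncard[OF uTV uF] by simp
  have yTV: "y \<in> tree_verts Hs" if "y \<in> X" for y using uX[OF that] TEsym TEv by blast
  have hadj: "TE y z" if "y \<in> X" "y \<notin> F" "z \<in> K" "z \<noteq> y" for y z
  proof (rule notW_adj)
    show "y \<notin> W" using WF[OF yTV[OF that(1)]] that(2) by blast
    show "{y, z} \<noteq> {u, v}" using that(1) X_def by (auto simp: doubleton_eq_iff)
    show "y \<in> K" "z \<in> K" "y \<noteq> z" using that X_def by auto
  qed
  obtain y where y: "y \<in> X" "y \<notin> F"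
  proof -
    have "X \<inter> F \<noteq> X" using cXF cardX by auto
    then show ?thesis using that by blast
  qed
  show False
  proof (cases "v \<in> W")
    case False
    have vX: "TE v x" if "x \<in> X" for x
    proof (rule notW_adj)
      show "v \<in> K" "x \<in> K" "v \<noteq> x" using that K X_def by auto
      show "{v, x} \<noteq> {u, v}" using that X_def by (auto simp: doubleton_eq_iff)
      show "v \<notin> W" using False .
    qed
    have L: "length Hs \<ge> 1" by (rule kr_len[OF T])
    have XX: "cop Hs x1 x2" if "x1 \<in> X" "x2 \<in> X" "x1 \<noteq> x2" for x1 x2
    proof -
      have "cop Hs u v \<or> cop Hs x1 x2"
        unfolding cop_def
        apply (rule cycle_aux[OF T L order_refl])
        using uX[OF that(1)] vX[OF that(1)] vX[OF that(2)] uX[OF that(2)] unfolding TE_def cop_def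
        by blast+
      then show ?thesis using nTEuv K(5) unfolding TE_def by blast
    qed
    have pw: "cop Hs p q" if pq: "p \<in> insert w X" "q \<in> insert w X" "p \<noteq> q" "\<And>x. x \<in> X \<Longrightarrow> TE w x" for p q w
    proof -
      consider "p = w" "q \<in> X" | "q = w" "p \<in> X" | "p \<in> X" "q \<in> X" using pq(1-3) by blast
      then show ?thesis
      proof cases
        case 1 then show ?thesis using pq(4) TE_def by blast
      next
        case 2 then have "TE w p" using pq(4) by simp
        then show ?thesis using cop_sym[of Hs w p] TE_def 2 by simp
      next
        case 3 then show ?thesis using XX pq(3) by blast
      qed
    qed
    have yu: "u \<noteq> y" "v \<noteq> y" using y X_def by auto
    obtain i where i: "i < length Hs" "insert u X \<subseteq> Hs!i"
      using clique_cop[OF T, of u "insert u X" y] y yu pw[of _ u] uX by blast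
    obtain j where j: "j < length Hs" "insert v X \<subseteq> Hs!j"
      using clique_cop[OF T, of v "insert v X" y] y yu pw[of _ v] vX by blast
    have "i = j"
    proof (rule ccontr)
      assume "i \<noteq> j"
      then have "card (Hs!i \<inter> Hs!j) \<le> 2" using copies_inter[OF T i(1) j(1)] by blast
      moreover have "card X \<le> card (Hs!i \<inter> Hs!j)" using i j finH[OF i(1)] by (intro card_mono) auto
      ultimately show False using cardX r5 by simp
    qed
    then have "cop Hs u v" using i j unfolding cop_def by blast
    then show False using nTEuv K(5) unfolding TE_def by blast
  next
    case True
    have vTE: "TE y v" using hadj[OF y K(4)] y X_def by auto
    have vF: "v \<in> F" using WF[OF _ True] TEv[OF TEsym[OF vTE]] by blast
    have vX: "v \<notin> X" using X_def by simp
    have "insert v (X \<inter> F) \<subseteq> N y"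
    proof
      fix w assume w: "w \<in> insert v (X \<inter> F)"
      then have "TE y w"
      proof
        assume "w = v" then show ?thesis using vTE by simp
      next
        assume "w \<in> X \<inter> F" then show ?thesis using hadj[OF y, of w] y X_def by auto
      qed
      then show "w \<in> N y" unfolding N_def using w vF te by blast
    qed
    then have "card (insert v (X \<inter> F)) < r - 2"
      using card_mono[OF Nfin] Ncard[OF yTV[OF y(1)] y(2)] by (meson le_less_trans)
    then have c1: "card (X \<inter> F) + 1 < r - 2" using vX finX by simp
    have csplit: "card X = card (X \<inter> F) + card (X - F)" using card_Int_Diff[OF finX] by simp
    then have c2: "2 \<le> card (X - F)" using c1 cardX by simp
    then obtain y1 y2 where y12: "y1 \<in> X - F" "y2 \<in> X - F" "y1 \<noteq> y2"
      using two_elems finX by (metis finite_Diff)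
    have a1: "cop Hs y1 z" if "z \<in> K" "z \<noteq> y1" for z using hadj[of y1 z] y12 that TE_def by blast
    have a2: "cop Hs y2 z" if "z \<in> K" "z \<noteq> y2" for z using hadj[of y2 z] y12 that TE_def by blast
    have y12K: "y1 \<in> K" "y2 \<in> K" "y1 \<noteq> u" "y2 \<noteq> u" "y1 \<noteq> v" "y2 \<noteq> v" using y12 X_def by auto
    have y12c: "cop Hs y1 y2" using a1[OF y12K(2)] y12(3) by blast
    have uy1: "cop Hs y1 u" using a1[OF K(3)] y12K by blast
    have uy2: "cop Hs y2 u" using a2[OF K(3)] y12K by blast
    have vy1: "cop Hs y1 v" using a1[OF K(4)] y12K by blast
    have vy2: "cop Hs y2 v" using a2[OF K(4)] y12K by blast
    obtain i where i: "i < length Hs" "y1 \<in> Hs!i" "y2 \<in> Hs!i" "u \<in> Hs!i"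
      using clique3[OF T y12(3) y12c uy1 uy2] by blast
    have XC: "X \<subseteq> Hs!i"
    proof
      fix x assume x: "x \<in> X"
      show "x \<in> Hs!i"
      proof (cases "x = y1 \<or> x = y2")
        case True then show ?thesis using i by auto
      next
        case False
        have xK: "x \<in> K" using x X_def by simp
        have "cop Hs u x" using uX[OF x] TE_def by blast
        moreover have "cop Hs y1 x" using a1[OF xK] False by blast
        moreover have "cop Hs y2 x" using a2[OF xK] False by blast
        ultimately obtain i' where i': "i' < length Hs" "y1 \<in> Hs!i'" "y2 \<in> Hs!i'" "u \<in> Hs!i'" "x \<in> Hs!i'"
          using clique4[OF T y12(3) y12c uy1 uy2] by blast
        have "i' = i" using three_common[OF T i'(1) i(1) i'(2-4) i(2-4)] y12(3) y12K(3,4) by metis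
        then show ?thesis using i' by simp
      qed
    qed
    obtain j where j: "j < length Hs" "y1 \<in> Hs!j" "y2 \<in> Hs!j" "v \<in> Hs!j"
      using clique3[OF T y12(3) y12c vy1 vy2] by blast
    have vC: "v \<notin> Hs!i" using nTEuv i K(5) unfolding TE_def cop_def by blast
    have ij: "i \<noteq> j" using vC j by auto
    have CD: "p = y1 \<or> p = y2" if "p \<in> Hs!i" "p \<in> Hs!j" for p
    proof (rule ccontr)
      assume "\<not> (p = y1 \<or> p = y2)"
      then have "i = j" using three_common[OF T i(1) j(1) i(2,3) that(1) j(2,3) that(2)] y12(3) by blast
      then show False using ij by simp
    qed
    have XF2: "X - F \<subseteq> {y1,y2}"
    proof
      fix y3 assume y3: "y3 \<in> X - F"
      show "y3 \<in> {y1,y2}"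
      proof (rule ccontr)
        assume n3: "y3 \<notin> {y1,y2}"
        have y3K: "y3 \<in> K" "y3 \<noteq> v" using y3 X_def by auto
        have "cop Hs y3 v" using hadj[of y3 v] y3 y3K K(4) TE_def by blast
        moreover have "cop Hs y1 y3" using a1[OF y3K(1)] n3 by blast
        moreover have "cop Hs y2 y3" using a2[OF y3K(1)] n3 by blast
        ultimately obtain j' where j': "j' < length Hs" "y1 \<in> Hs!j'" "y2 \<in> Hs!j'" "v \<in> Hs!j'" "y3 \<in> Hs!j'"
          using clique4[OF T y12(3) y12c vy1 vy2] cop_sym[of Hs y3 v] by blast
        have "j' = j" using three_common[OF T j'(1) j(1) j'(2-4) j(2-4)] y12(3) y12K(5,6) by metis
        then have "y3 \<in> Hs!j" using j' by simp
        moreover have "y3 \<in> Hs!i" using XC y3 by auto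
        ultimately show False using CD n3 by auto
      qed
    qed
    have "card (X - F) \<le> card {y1,y2}" using XF2 by (intro card_mono) auto
    then have "card (X - F) \<le> 2" using y12(3) by simp
    then have cXF: "card (X \<inter> F) = r - 4" using csplit cardX c2 by simp
    define Ci where "Ci = Hs!i \<inter> F"
    define Dj where "Dj = Hs!j \<inter> F"
    have finCi: "finite Ci" "finite Dj" using finH i(1) j(1) Ci_def Dj_def by auto
    have disj: "Ci \<inter> Dj = {}" using CD y12 Ci_def Dj_def by auto
    have sub: "Ci \<union> Dj \<subseteq> N y1"
    proof
      fix p assume p: "p \<in> Ci \<union> Dj"
      then have "p \<noteq> y1" "p \<in> F" using y12 Ci_def Dj_def by auto
      moreover have "cop Hs y1 p" using p i j unfolding Ci_def Dj_def cop_def by blast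
      ultimately show "p \<in> N y1" unfolding N_def te TE_def by blast
    qed
    have y1X: "y1 \<in> X" "y1 \<notin> F" using y12 by auto
    have "card (Ci \<union> Dj) < r - 2"
      using card_mono[OF Nfin sub] Ncard[OF yTV[OF y1X(1)] y1X(2)] by simp
    then have sumc: "card Ci + card Dj < r - 2" using card_Un_disjoint[OF finCi disj] by simp
    have "X \<inter> F \<subseteq> Ci" using XC Ci_def by auto
    then have c1: "r - 4 \<le> card Ci" using card_mono[OF finCi(1)] cXF by metis
    have "v \<in> Dj" using j vF Dj_def by auto
    then have c2: "1 \<le> card Dj" using finCi(2) by (metis One_nat_def Suc_leI card_gt_0_iff empty_iff)
    have eq1: "card Ci = r - 4" and eq2: "card Dj = 1" using sumc c1 c2 r5 by auto
    have ie: "internal_edge Hs {y1,y2}"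
      unfolding internal_edge_def using te[of y1 y2] y12 y12c i j ij unfolding TE_def by blast
    show False
      apply (rule nosp[OF ie i(1) j(1) ij _ _ eq1[unfolded Ci_def] eq2[unfolded Dj_def], of y1])
      using i j y12 by auto
  qed
qed



lemma step_mono: "bp_step r Hs A A' \<Longrightarrow> A \<subseteq> A'"
  unfolding bp_step_def by blast

lemma star_mono: "(bp_step r Hs)\<^sup>*\<^sup>* A B \<Longrightarrow> A \<subseteq> B"
  by (induction rule: rtranclp_induct) (auto dest: step_mono)

theorem lemma6p3:
  fixes r :: nat and Hs :: "'a set list" and VG :: "'a set" and EG :: "'a set set"
    and F :: "'a set"
  assumes "r \<ge> 5"
    and "kr_tree r Hs"
    and "finite VG"
    and "is_graph VG EG"
    and "bp_final r Hs (VG \<inter> tree_verts Hs) F"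
  shows "kr_closure r (VG \<union> tree_verts Hs) (EG \<union> tree_edges Hs)
           \<subseteq> complete_edges (VG \<union> F) \<union> tree_edges Hs"
proof -
  have star: "(bp_step r Hs)\<^sup>*\<^sup>* (VG \<inter> tree_verts Hs) F" and fin: "\<not> (\<exists>F'. bp_step r Hs F F')"
    using assms(5) unfolding bp_final_def by blast+
  have SF: "VG \<inter> tree_verts Hs \<subseteq> F" using star_mono[OF star] .
  have nous: "\<not> usual_step r Hs F w" for w
  proof
    assume "usual_step r Hs F w"
    then have "bp_step r Hs F (insert w F)" unfolding bp_step_def by blast
    then show False using fin by blast
  qed
  have nosp: False if "internal_edge Hs f" "i < length Hs" "j < length Hs" "i \<noteq> j"
         "f \<subseteq> Hs ! i" "f \<subseteq> Hs ! j"
         "card (Hs ! i \<inter> F) = r - 4" "card (Hs ! j \<inter> F) = 1" "f \<inter> F = {}" "w \<in> f" for f i j w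
  proof -
    have "bp_step r Hs F (insert w F)" unfolding bp_step_def
      apply (rule disjI2)
      using nous that by blast
    then show False using fin by blast
  qed
  have EG: "EG \<subseteq> complete_edges (VG \<union> F)"
    using assms(4) unfolding is_graph_def complete_edges_def by blast
  show ?thesis
  proof
    fix e assume "e \<in> kr_closure r (VG \<union> tree_verts Hs) (EG \<union> tree_edges Hs)"
    then show "e \<in> complete_edges (VG \<union> F) \<union> tree_edges Hs"
    proof (induction rule: kr_closure.induct)
      case (base e)
      then show ?case using EG by blast
    next
      case (add K u v)
      show ?case
      proof (rule ccontr)
        assume nuv: "{u, v} \<notin> complete_edges (VG \<union> F) \<union> tree_edges Hs"
        have pairs: "{x,y} \<in> complete_edges (VG \<union> F) \<union> tree_edges Hs"
          if "x \<in> K" "y \<in> K" "x \<noteq> y" "{x,y} \<noteq> {u,v}" for x y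
          using add.IH that by blast
        have "u \<notin> VG \<union> F \<or> v \<notin> VG \<union> F"
          using nuv complete_edges_iff[of u v "VG \<union> F"] add.hyps(6) by blast
        then show False
        proof
          assume "u \<notin> VG \<union> F"
          show False
            by (rule key[OF assms(1,2) SF nous nosp add.hyps(2,3,4,5,6) pairs nuv \<open>u \<notin> VG \<union> F\<close>])
        next
          assume vW: "v \<notin> VG \<union> F"
          have pairs': "{x,y} \<in> complete_edges (VG \<union> F) \<union> tree_edges Hs"
            if "x \<in> K" "y \<in> K" "x \<noteq> y" "{x,y} \<noteq> {v,u}" for x y
            using pairs that by (simp add: insert_commute)
          have nvu: "{v,u} \<notin> complete_edges (VG \<union> F) \<union> tree_edges Hs"
            using nuv by (simp add: insert_commute)
          show False
            by (rule key[OF assms(1,2) SF nous nosp add.hyps(2,3,5,4) add.hyps(6)[symmetric] pairs' nvu vW])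
        qed
      qed
    qed
  qed
qed


end
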